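(* Consider an instance of the Side-Access Compact Retrieval Problem, a feasible solution, a cycle $c$ of it, and the set $Y$ of targets retrieved in cycle $c$. List the distinct heights $\{h_c(b): b\in Y\}$ in increasing order as $h_1<\dots<h_p$. Then $h_{i+1}=h_i+1$ for all $i\in\{1,\dots,p-1\}$, i.e., the heights of $Y$ form a consecutive interval.
   Context: A slice is a sequence of stacks $T=(1,\dots,m)$, indexed from the entry side (stack $1$) outward; "left" means smaller index. Stack $t$ initially consists of $h(t)\ge0$ unit loads (ULs) stacked without gaps; a UL at height $k$ has exactly $k$ ULs below it in its stack. A pick-list $\mathcal B$ of target ULs is given; target $b$ lies in stack $s(b)$ at initial height $h(b)$. Retrieval proceeds in cycles $c=1,2,\dots$; $h_c(t)$, $h_c(b)$ are the heights of stack $t$ and of a not-yet-retrieved target $b$ at the start of cycle $c$ ($h_1=h$). In cycle $c$ one chooses clearance levels $\ell_c(t)\in\{0,\dots,h_c(t)\}$: the top $e_c(t)=h_c(t)-\ell_c(t)$ ULs of stack $t$ are lifted for the whole cycle. Then a sequence $(b_{c,1},\dots,b_{c,k})$ of targets is retrieved, with residual heights $d_{c,0}=\ell_c$ and $d_{c,i}(t)=d_{c,i-1}(t)-1$ if $t=s(b_{c,i})$, else unchanged. Retrieving $b$ (stack $t$, height $h=h_c(b)$) as the $i$-th retrieval requires accessibility: (a) $d_{c,i-1}(t)=h+1$ and (b) $d_{c,i-1}(t')=h$ for all $t'<t$. Afterwards lifted ULs are lowered, $h_{c+1}(t)=d_{c,k}(t)+e_c(t)$, and each remaining target's height decreases by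 the number of targets retrieved in cycle $c$ below it in its stack. Non-targets are never removed. A solution is feasible if every target is retrieved exactly once and is accessible when retrieved. *)

theory Defs
  imports Main
begin

(* Stacks are indexed 1..m. Targets are elements of an abstract type 'b;
   s b = stack of target b, hb0 b = initial height of b. A "state" is a pair
   (H, hb): H t = current height of stack t, hb b = current height of a
   not-yet-retrieved target b. A cycle is a pair (l, bs): clearance levels l
   and the ordered retrieval sequence bs. *)

definition valid_instance ::
  "nat \<Rightarrow> (nat \<Rightarrow> nat) \<Rightarrow> 'b set \<Rightarrow> ('b \<Rightarrow> nat) \<Rightarrow> ('b \<Rightarrow> nat) \<Rightarrow> bool" where
  "valid_instance m h B s hb0 \<longleftrightarrow>
     finite B \<and>
     (\<forall>b\<in>B. 1 \<le> s b \<and> s b \<le> m \<and> hb0 b < h (s b)) \<and>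
     inj_on (\<lambda>b. (s b, hb0 b)) B"

fun resid :: "('b \<Rightarrow> nat) \<Rightarrow> (nat \<Rightarrow> nat) \<Rightarrow> 'b list \<Rightarrow> (nat \<Rightarrow> nat)" where
  "resid s d [] = d"
| "resid s d (b # bs) = resid s (d(s b := d (s b) - 1)) bs"

definition accessible ::
  "('b \<Rightarrow> nat) \<Rightarrow> (nat \<Rightarrow> nat) \<Rightarrow> ('b \<Rightarrow> nat) \<Rightarrow> 'b \<Rightarrow> bool" where
  "accessible s d hb b \<longleftrightarrow>
     d (s b) = hb b + 1 \<and> (\<forall>t'. 1 \<le> t' \<and> t' < s b \<longrightarrow> d t' = hb b)"

definition cycle_step ::
  "('b \<Rightarrow> nat) \<Rightarrow> (nat \<Rightarrow> nat) \<times> ('b \<Rightarrow> nat) \<Rightarrow> (nat \<Rightarrow> nat) \<times> 'b list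
     \<Rightarrow> (nat \<Rightarrow> nat) \<times> ('b \<Rightarrow> nat)" where
  "cycle_step s st cyc =
     (let H = fst st; hb = snd st; l = fst cyc; bs = snd cyc in
      (\<lambda>t. resid s l bs t + (H t - l t),
       \<lambda>b. hb b - card {b'\<in>set bs. s b' = s b \<and> hb b' < hb b}))"

(* state at the start of cycle with 0-based index c *)
definition state_at ::
  "('b \<Rightarrow> nat) \<Rightarrow> (nat \<Rightarrow> nat) \<Rightarrow> ('b \<Rightarrow> nat) \<Rightarrow> ((nat \<Rightarrow> nat) \<times> 'b list) list \<Rightarrow> nat
     \<Rightarrow> (nat \<Rightarrow> nat) \<times> ('b \<Rightarrow> nat)" where
  "state_at s h hb0 cs c = foldl (cycle_step s) (h, hb0) (take c cs)"

definition valid_cycle ::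
  "nat \<Rightarrow> ('b \<Rightarrow> nat) \<Rightarrow> (nat \<Rightarrow> nat) \<times> ('b \<Rightarrow> nat) \<Rightarrow> (nat \<Rightarrow> nat) \<times> 'b list \<Rightarrow> bool" where
  "valid_cycle m s st cyc \<longleftrightarrow>
     (\<forall>t. 1 \<le> t \<and> t \<le> m \<longrightarrow> fst cyc t \<le> fst st t) \<and>
     (\<forall>i < length (snd cyc).
        accessible s (resid s (fst cyc) (take i (snd cyc))) (snd st) (snd cyc ! i))"

definition feasible ::
  "nat \<Rightarrow> (nat \<Rightarrow> nat) \<Rightarrow> 'b set \<Rightarrow> ('b \<Rightarrow> nat) \<Rightarrow> ('b \<Rightarrow> nat)
     \<Rightarrow> ((nat \<Rightarrow> nat) \<times> 'b list) list \<Rightarrow> bool" where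
  "feasible m h B s hb0 cs \<longleftrightarrow>
     distinct (concat (map snd cs)) \<and> set (concat (map snd cs)) = B \<and>
     (\<forall>c < length cs. valid_cycle m s (state_at s h hb0 cs c) (cs ! c))"

end

theory Submission
  imports Defs
begin

lemma resid_snoc: "resid s d (xs @ [x]) = (resid s d xs)(s x := resid s d xs (s x) - 1)"
  by (induction xs arbitrary: d) auto

lemma key:
  assumes acc: "\<forall>i<length bs. accessible s (resid s l (take i bs)) hb (bs!i)"
    and t0: "\<forall>b\<in>set bs. t0 \<le> s b" "1 \<le> t0"
    and j: "j < length bs"
  shows "hb (bs!j) = resid s l (take (Suc j) bs) t0 \<and>
         resid s l (take (Suc j) bs) t0 \<le> resid s l (take j bs) t0 \<and>
         resid s l (take j bs) t0 \<le> resid s l (take (Suc j) bs) t0 + 1"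
proof -
  let ?d = "resid s l (take j bs)"
  let ?b = "bs ! j"
  have tk: "take (Suc j) bs = take j bs @ [?b]" using j by (simp add: take_Suc_conv_app_nth)
  have a: "?d (s ?b) = hb ?b + 1" "\<forall>t'. 1 \<le> t' \<and> t' < s ?b \<longrightarrow> ?d t' = hb ?b"
    using acc j unfolding accessible_def by auto
  have le: "t0 \<le> s ?b" using t0 j by auto
  show ?thesis
  proof (cases "s ?b = t0")
    case True
    then show ?thesis using a unfolding tk resid_snoc by auto
  next
    case False
    then have "t0 < s ?b" using le by auto
    then have "?d t0 = hb ?b" using a t0 by auto
    then show ?thesis using False unfolding tk resid_snoc by auto
  qed
qed

lemma walk_ivt:
  fixes D :: "nat \<Rightarrow> nat"
  assumes w: "\<forall>j<n. D (Suc j) \<le> D j \<and> D j \<le> D (Suc j) + 1"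
  shows "i \<le> k \<Longrightarrow> k \<le> n \<Longrightarrow> D k \<le> v \<Longrightarrow> v \<le> D i \<Longrightarrow> \<exists>j. i \<le> j \<and> j \<le> k \<and> D j = v"
proof (induction k)
  case 0
  then show ?case by auto
next
  case (Suc k)
  show ?case
  proof (cases "i = Suc k")
    case True
    then show ?thesis using Suc by auto
  next
    case False
    then have ik: "i \<le> k" using Suc by auto
    have st: "D (Suc k) \<le> D k \<and> D k \<le> D (Suc k) + 1" using w Suc by auto
    show ?thesis
    proof (cases "D k \<le> v")
      case True
      then obtain j where "i \<le> j \<and> j \<le> k \<and> D j = v" using Suc.IH Suc.prems ik by fastforce
      then show ?thesis by (intro exI[of _ j]) auto
    next
      case False
      then have "v = D (Suc k)" using st Suc by auto
      then show ?thesis using Suc by auto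
    qed
  qed
qed

lemma walk_mono:
  fixes D :: "nat \<Rightarrow> nat"
  assumes w: "\<forall>j<n. D (Suc j) \<le> D j \<and> D j \<le> D (Suc j) + 1"
  shows "i \<le> k \<Longrightarrow> k \<le> n \<Longrightarrow> D k \<le> D i"
proof (induction k)
  case 0
  then show ?case by auto
next
  case (Suc k)
  show ?case
  proof (cases "i = Suc k")
    case True then show ?thesis by simp
  next
    case False
    then have "i \<le> k" "k \<le> n" "k < n" using Suc.prems by auto
    then have "D k \<le> D i" "D (Suc k) \<le> D k" using Suc.IH w by auto
    then show ?thesis by linarith
  qed
qed

lemma consec_list:
  fixes L :: "nat list"
  assumes sw: "sorted_wrt (<) L"
    and cv: "\<forall>x\<in>set L. \<forall>y\<in>set L. \<forall>g. x < g \<and> g < y \<longrightarrow> g \<in> set L"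
    and i: "i + 1 < length L"
  shows "L ! (i + 1) = L ! i + 1"
proof (rule ccontr)
  have lt: "L ! i < L ! (i+1)" using sw i by (simp add: sorted_wrt_nth_less)
  assume "L ! (i + 1) \<noteq> L ! i + 1"
  then have g: "L ! i < L ! i + 1" "L ! i + 1 < L ! (i+1)" using lt by linarith+
  have m: "L ! i \<in> set L" "L ! (i+1) \<in> set L" using i by simp_all
  have "L ! i + 1 \<in> set L" using cv m g by blast
  then obtain j where j: "j < length L" "L ! j = L ! i + 1"
    by (auto simp: in_set_conv_nth)
  have so: "sorted L" using sw by (simp add: sorted_wrt_mono_rel strict_sorted_imp_sorted)
  show False
  proof (cases "j \<le> i")
    case True
    then have "L ! j \<le> L ! i" using i sorted_nth_mono[OF so True] by simp
    then show False using j by simp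
  next
    case False
    then have "i + 1 \<le> j" by simp
    then have "L ! (i+1) \<le> L ! j" using j sorted_nth_mono[OF so] by blast
    then show False using j g by simp
  qed
qed

lemma sorted_consec:
  fixes A :: "nat set"
  assumes fin: "finite A" and cv: "\<forall>x\<in>A. \<forall>y\<in>A. \<forall>g. x < g \<and> g < y \<longrightarrow> g \<in> A"
  shows "\<forall>i. i + 1 < length (sorted_list_of_set A) \<longrightarrow>
    sorted_list_of_set A ! (i + 1) = sorted_list_of_set A ! i + 1"
proof (intro allI impI)
  fix i
  assume i: "i + 1 < length (sorted_list_of_set A)"
  have sL: "set (sorted_list_of_set A) = A" using fin by simp
  show "sorted_list_of_set A ! (i + 1) = sorted_list_of_set A ! i + 1"
    by (rule consec_list[OF _ _ i]) (simp, unfold sL, rule cv)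
qed

theorem lemma2:
  fixes m :: nat and h :: "nat \<Rightarrow> nat" and B :: "'b set"
    and s hb0 :: "'b \<Rightarrow> nat" and cs :: "((nat \<Rightarrow> nat) \<times> 'b list) list" and c :: nat
  assumes "valid_instance m h B s hb0"
    and "feasible m h B s hb0 cs"
    and "c < length cs"
  shows "let hc = snd (state_at s h hb0 cs c);
             Y = set (snd (cs ! c));
             L = sorted_list_of_set (hc ` Y)
         in \<forall>i. i + 1 < length L \<longrightarrow> L ! (i + 1) = L ! i + 1"
proof -
  define hc where "hc = snd (state_at s h hb0 cs c)"
  define bs where "bs = snd (cs ! c)"
  define l where "l = fst (cs ! c)"
  have acc: "\<forall>i<length bs. accessible s (resid s l (take i bs)) hc (bs!i)"
    using assms(2,3) unfolding feasible_def valid_cycle_def hc_def bs_def l_def by auto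
  have YB: "set bs \<subseteq> B" using assms(2,3) unfolding feasible_def bs_def
    using nth_mem[OF assms(3)] by fastforce
  have sB: "\<forall>b\<in>B. 1 \<le> s b" using assms(1) unfolding valid_instance_def by auto
  have conv: "\<forall>x\<in>hc ` set bs. \<forall>y\<in>hc ` set bs. \<forall>g. x < g \<and> g < y \<longrightarrow> g \<in> hc ` set bs"
  proof (cases "bs = []")
    case True then show ?thesis by auto
  next
    case False
    define t0 where "t0 = Min (s ` set bs)"
    have t0: "\<forall>b\<in>set bs. t0 \<le> s b" "1 \<le> t0"
      using False YB sB unfolding t0_def by auto
    define D where "D = (\<lambda>j. resid s l (take j bs) t0)"
    have K: "\<And>j. j < length bs \<Longrightarrow> hc (bs!j) = D (Suc j) \<and> D (Suc j) \<le> D j \<and> D j \<le> D (Suc j) + 1"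
      using key[OF acc t0] unfolding D_def by blast
    have w: "\<forall>j<length bs. D (Suc j) \<le> D j \<and> D j \<le> D (Suc j) + 1" using K by blast
    have img: "hc ` set bs = (\<lambda>j. D (Suc j)) ` {..<length bs}"
    proof
      show "hc ` set bs \<subseteq> (\<lambda>j. D (Suc j)) ` {..<length bs}"
        using K by (force simp: in_set_conv_nth)
      show "(\<lambda>j. D (Suc j)) ` {..<length bs} \<subseteq> hc ` set bs"
        using K by (force simp: in_set_conv_nth)
    qed
    show ?thesis
    proof (intro ballI allI impI)
      fix x y g assume x: "x \<in> hc ` set bs" and y: "y \<in> hc ` set bs" and g: "x < g \<and> g < y"
      obtain j1 where j1: "j1 < length bs" "x = D (Suc j1)" using x img by auto
      obtain j2 where j2: "j2 < length bs" "y = D (Suc j2)" using y img by auto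
      have "j2 < j1"
      proof (rule ccontr)
        assume "\<not> j2 < j1"
        then have "D (Suc j2) \<le> D (Suc j1)" using walk_mono[OF w, of "Suc j1" "Suc j2"] j2 by auto
        then show False using g j1 j2 by auto
      qed
      then obtain j where j: "Suc j2 \<le> j" "j \<le> Suc j1" "D j = g"
        using walk_ivt[OF w, of "Suc j2" "Suc j1" g] g j1 j2 by auto
      then obtain j' where "j = Suc j'" by (cases j) auto
      then show "g \<in> hc ` set bs" using j j1 img by auto
    qed
  qed
  show ?thesis unfolding Let_def hc_def[symmetric] bs_def[symmetric]
    by (rule sorted_consec[OF _ conv]) simp
qed

end
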